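(* There is $C>0$ (depending only on $R$) such that for all $\varepsilon\in(0,1]$, $$\langle\hat h_\varepsilon,-\Delta_{S^2}\hat h_\varepsilon\rangle_{L^2(S^2)}\le C\varepsilon .$$
   Context: Setup: fix $R>0$, $\tau=0$. $\hat h_\varepsilon(w)=\tilde h_\varepsilon(\varepsilon w)$, where $\tilde h_\varepsilon=h_\varepsilon-\log|\frac{z-\varepsilon}{z+\varepsilon}|^2$ and $h_\varepsilon=\log|u|^2$ for the gauged $\mathbb{P}^1$ vortex-antivortex pair on the round sphere $S^2_R$ (metric $\frac{4R^2}{(1+|z|^2)^2}dzd\bar z$) with vortex at $z=\varepsilon$, antivortex at $z=-\varepsilon$; $\hat h_\varepsilon$ is a smooth function on $S^2$ satisfying $-\Delta_{S^2}\hat h+2R^2\varepsilon^2f_\varepsilon(w)^2F(w,\hat h)=0$ with $f_\varepsilon(w)=\frac{1+|w|^2}{1+\varepsilon^2|w|^2}$ and $F(w,v)=\frac{|w-1|^2e^v-|w+1|^2}{|w-1|^2e^v+|w+1|^2}$. Here $S^2$ is the unit round sphere in the stereographic coordinate $w$ (area form $\frac{4\,d^2w}{(1+|w|^2)^2}$) and $\Delta_{S^2}=\frac{(1+|w|^2)^2}{4}\nabla^2_w$ is its (negative semidefinite) Laplacian. *)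

theory Defs
  imports "HOL-Analysis.Analysis"
begin

text \<open>Functions on the plane are functions on the complex numbers (the stereographic
coordinate w = x + i y).  Directional (partial) derivative along the direction d.\<close>

definition pd :: "complex \<Rightarrow> (complex \<Rightarrow> real) \<Rightarrow> complex \<Rightarrow> real" where
  "pd d f x = deriv (\<lambda>t::real. f (x + of_real t * d)) 0"

fun Ck_on :: "nat \<Rightarrow> (complex \<Rightarrow> real) \<Rightarrow> complex set \<Rightarrow> bool" where
  "Ck_on 0 f S = continuous_on S f"
| "Ck_on (Suc k) f S = ((\<forall>x\<in>S. f differentiable (at x)) \<and>
      Ck_on k (pd 1 f) S \<and> Ck_on k (pd \<i> f) S)"

definition smooth_on :: "(complex \<Rightarrow> real) \<Rightarrow> complex set \<Rightarrow> bool" where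
  "smooth_on f S \<longleftrightarrow> (\<forall>k. Ck_on k f S)"

text \<open>Smooth function on the unit sphere S^2, given in the stereographic coordinate w:
smooth in the chart w on all of C, and smooth in the chart zeta = 1/w near the
point at infinity (i.e. w \<mapsto> h(1/zeta) extends smoothly across zeta = 0).\<close>

definition smooth_S2 :: "(complex \<Rightarrow> real) \<Rightarrow> bool" where
  "smooth_S2 h \<longleftrightarrow> smooth_on h UNIV \<and>
     (\<exists>g. smooth_on g (ball 0 1) \<and> (\<forall>\<zeta>\<in>ball 0 1 - {0}. g \<zeta> = h (inverse \<zeta>)))"

definition flat_lap :: "(complex \<Rightarrow> real) \<Rightarrow> complex \<Rightarrow> real" where
  "flat_lap h w = pd 1 (pd 1 h) w + pd \<i> (pd \<i> h) w"

definition lap_S2 :: "(complex \<Rightarrow> real) \<Rightarrow> complex \<Rightarrow> real" where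
  "lap_S2 h w = (1 + (cmod w)\<^sup>2)\<^sup>2 / 4 * flat_lap h w"

definition f_eps :: "real \<Rightarrow> complex \<Rightarrow> real" where
  "f_eps \<epsilon> w = (1 + (cmod w)\<^sup>2) / (1 + \<epsilon>\<^sup>2 * (cmod w)\<^sup>2)"

definition F_nl :: "complex \<Rightarrow> real \<Rightarrow> real" where
  "F_nl w v = ((cmod (w - 1))\<^sup>2 * exp v - (cmod (w + 1))\<^sup>2) /
              ((cmod (w - 1))\<^sup>2 * exp v + (cmod (w + 1))\<^sup>2)"

definition hat_h_eq :: "real \<Rightarrow> real \<Rightarrow> (complex \<Rightarrow> real) \<Rightarrow> bool" where
  "hat_h_eq R \<epsilon> h \<longleftrightarrow> (\<forall>w. - lap_S2 h w + 2 * R\<^sup>2 * \<epsilon>\<^sup>2 * (f_eps \<epsilon> w)\<^sup>2 * F_nl w (h w) = 0)"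

text \<open>L^2(S^2) pairing <h, -Delta_{S^2} h>, with area form 4 d^2w / (1+|w|^2)^2.\<close>

definition dirichlet_S2 :: "(complex \<Rightarrow> real) \<Rightarrow> real" where
  "dirichlet_S2 h = (LINT w|lborel. h w * (- lap_S2 h w) * (4 / (1 + (cmod w)\<^sup>2)\<^sup>2))"

end

theory Submission
  imports Defs
begin

lemma F_mono_aux:
  fixes p q v :: real assumes "p>0" "q>0"
  shows "(q\<^sup>2 * exp v - p\<^sup>2)/(q\<^sup>2 * exp v + p\<^sup>2) = 1 - 2 * p\<^sup>2/(q\<^sup>2 * exp v + p\<^sup>2)"
proof -
  have "q\<^sup>2 * exp v + p\<^sup>2 > 0" using assms by (simp add: add_pos_pos)
  then show ?thesis by (simp add: field_simps)
qed

lemma ln_ratio: fixes p q :: real assumes "p>0" "q>0" shows "ln (p\<^sup>2/q\<^sup>2) \<le> 2 * (p-q)/q"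
proof -
  have "ln (p\<^sup>2/q\<^sup>2) = 2 * ln (p/q)" using assms by (simp add: ln_div ln_mult power2_eq_square)
  moreover have "ln (p/q) \<le> p/q - 1" using assms by (intro ln_le_minus_one) simp
  moreover have "p/q - 1 = (p-q)/q" using assms by (simp add: diff_divide_distrib)
  moreover have "2 * (p-q)/q = 2 * ((p-q)/q)" by simp
  ultimately show ?thesis by linarith
qed

lemma final_bd: fixes p q :: real assumes "p>0" "q>0" "\<bar>p-q\<bar>\<le>2" "p+q\<ge>2" "p \<ge> q"
  shows "2 * (p-q)/q * ((p\<^sup>2-q\<^sup>2)/(p\<^sup>2+q\<^sup>2)) \<le> 8/q"
proof -
  have d: "p\<^sup>2+q\<^sup>2 > 0" using assms by (intro add_pos_pos) auto
  have e: "p\<^sup>2-q\<^sup>2 = (p-q) * (p+q)" by (simp add: power2_eq_square algebra_simps)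
  have sq: "(p-q)^2 \<le> 4" using power_mono[of "\<bar>p-q\<bar>" 2 2] assms(3) by simp
  have m1: "2 * (p-q)^2 * (p+q) \<le> 8 * (p+q)" using sq assms by (intro mult_right_mono) auto
  have m2: "(p+q)*2 \<le> (p+q) * (p+q)" using assms by (intro mult_left_mono) auto
  have m3: "(p+q) * (p+q) \<le> 2 * (p\<^sup>2+q\<^sup>2)" using sum_squares_ge_zero[of "p-q" 0] by (simp add: power2_eq_square algebra_simps)
  have n: "2 * (p-q)^2 * (p+q) \<le> 8 * (p\<^sup>2+q\<^sup>2)" using m1 m2 m3 by linarith
  have "2 * (p-q)/q * ((p\<^sup>2-q\<^sup>2)/(p\<^sup>2+q\<^sup>2)) = (2 * (p-q)^2 * (p+q)/(p\<^sup>2+q\<^sup>2))/q"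
    unfolding e by (simp add: power2_eq_square mult.commute mult.left_commute mult.assoc)
  also have "\<dots> \<le> 8/q"
  proof -
    have "2 * (p-q)^2 * (p+q)/(p\<^sup>2+q\<^sup>2) \<le> 8" using d n by (simp add: pos_divide_le_eq)
    then show ?thesis using assms by (intro divide_right_mono) auto
  qed
  finally show ?thesis .
qed

lemma phi_bound: fixes p q v :: real assumes p: "p>0" and q: "q>0" and pq: "\<bar>p-q\<bar>\<le>2" "p+q\<ge>2"
  shows "-v * ((q\<^sup>2 * exp v - p\<^sup>2)/(q\<^sup>2 * exp v + p\<^sup>2)) \<le> 8 * (1/p + 1/q)"
proof -
  define Fv where "Fv = (q\<^sup>2 * exp v - p\<^sup>2)/(q\<^sup>2 * exp v + p\<^sup>2)"
  have p2: "p\<^sup>2 > 0" and q2: "q\<^sup>2 > 0" using p q by auto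
  have den: "q\<^sup>2 * exp v + p\<^sup>2 > 0" using p2 q2 by (simp add: add_pos_pos)
  have rhs: "0 \<le> 8 * (1/p + 1/q)" using p q by simp
  consider "v \<ge> 0" "Fv \<ge> 0" | "v \<le> 0" "Fv \<le> 0" | "v > 0" "Fv < 0" | "v < 0" "Fv > 0" by linarith
  then have "- v * Fv \<le> 8 * (1/p + 1/q)"
  proof cases
    case 1 then have "0 \<le> v * Fv" by (simp add: mult_nonneg_nonneg)
    then show ?thesis using rhs by linarith
  next
    case 2 then have "0 \<le> v * Fv" by (simp add: mult_nonpos_nonpos)
    then show ?thesis using rhs by linarith
  next
    case 3
    have lt: "q\<^sup>2 * exp v < p\<^sup>2" using 3(2) den unfolding Fv_def by (simp add: divide_less_0_iff)
    have "q\<^sup>2 < q\<^sup>2 * exp v" using 3(1) q2 by simp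
    with lt have "q\<^sup>2 < p\<^sup>2" by linarith
    then have qp: "q \<le> p" using p by (meson less_imp_le less_imp_le power_less_imp_less_base)
    have "exp v < p\<^sup>2/q\<^sup>2" using lt q2 by (simp add: pos_less_divide_eq mult.commute)
    then have vl: "v < ln (p\<^sup>2/q\<^sup>2)" using p2 q2 by (metis exp_less_cancel_iff exp_ln divide_pos_pos)
    have "-Fv \<le> (p\<^sup>2-q\<^sup>2)/(p\<^sup>2+q\<^sup>2)"
    proof -
      have "q\<^sup>2 + p\<^sup>2 \<le> q\<^sup>2 * exp v + p\<^sup>2" using \<open>q\<^sup>2 < q\<^sup>2 * exp v\<close> by simp
      then have "2 * p\<^sup>2/(q\<^sup>2 * exp v + p\<^sup>2) \<le> 2 * p\<^sup>2/(q\<^sup>2 + p\<^sup>2)" using p2 q2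
        by (intro divide_left_mono) (auto simp: add_pos_pos)
      moreover have "(p\<^sup>2-q\<^sup>2)/(p\<^sup>2+q\<^sup>2) = 2 * p\<^sup>2/(q\<^sup>2 + p\<^sup>2) - 1" using p2 q2
        by (simp add: field_simps)
      ultimately show ?thesis unfolding Fv_def F_mono_aux[OF p q] by linarith
    qed
    have Fn: "0 \<le> -Fv" using 3 by simp
    have "- v * Fv = v * (-Fv)" by simp
    also have "\<dots> \<le> ln (p\<^sup>2/q\<^sup>2) * ((p\<^sup>2-q\<^sup>2)/(p\<^sup>2+q\<^sup>2))"
      using vl \<open>-Fv \<le> _\<close> Fn 3(1) by (intro mult_mono) auto
    also have "\<dots> \<le> 2 * (p-q)/q * ((p\<^sup>2-q\<^sup>2)/(p\<^sup>2+q\<^sup>2))"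
      using ln_ratio[OF p q] \<open>q\<^sup>2 < p\<^sup>2\<close> by (intro mult_right_mono) (auto simp: add_pos_pos p2 q2 less_imp_le)
    also have "\<dots> \<le> 8/q" using final_bd[OF p q pq qp] .
    also have "\<dots> \<le> 8 * (1/p + 1/q)" using p by simp
    finally show ?thesis .
  next
    case 4
    have gt: "q\<^sup>2 * exp v > p\<^sup>2" using 4(2) den unfolding Fv_def by (simp add: zero_less_divide_iff)
    have "q\<^sup>2 * exp v < q\<^sup>2" using 4(1) q2 by simp
    with gt have "p\<^sup>2 < q\<^sup>2" by linarith
    then have qp: "p \<le> q" using q by (meson less_imp_le less_imp_le power_less_imp_less_base)
    have "exp (-v) < q\<^sup>2/p\<^sup>2" using gt p2 q2 by (simp add: exp_minus pos_less_divide_eq field_simps)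
    then have vl: "-v < ln (q\<^sup>2/p\<^sup>2)" using p2 q2 by (metis exp_less_cancel_iff exp_ln divide_pos_pos)
    have "Fv \<le> (q\<^sup>2-p\<^sup>2)/(q\<^sup>2+p\<^sup>2)"
    proof -
      have "q\<^sup>2 * exp v + p\<^sup>2 \<le> q\<^sup>2 + p\<^sup>2" using \<open>q\<^sup>2 * exp v < q\<^sup>2\<close> by simp
      then have "2 * p\<^sup>2/(q\<^sup>2 + p\<^sup>2) \<le> 2 * p\<^sup>2/(q\<^sup>2 * exp v + p\<^sup>2)" using p2 q2 den
        by (intro divide_left_mono) (auto simp: add_pos_pos)
      moreover have "(q\<^sup>2-p\<^sup>2)/(q\<^sup>2+p\<^sup>2) = 1 - 2 * p\<^sup>2/(q\<^sup>2 + p\<^sup>2)" using p2 q2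
        by (simp add: field_simps)
      ultimately show ?thesis unfolding Fv_def F_mono_aux[OF p q] by linarith
    qed
    have pq': "\<bar>q-p\<bar>\<le>2" "q+p\<ge>2" using pq by auto
    have "- v * Fv \<le> ln (q\<^sup>2/p\<^sup>2) * ((q\<^sup>2-p\<^sup>2)/(q\<^sup>2+p\<^sup>2))"
      using vl \<open>Fv \<le> _\<close> 4 by (intro mult_mono) auto
    also have "\<dots> \<le> 2 * (q-p)/p * ((q\<^sup>2-p\<^sup>2)/(q\<^sup>2+p\<^sup>2))"
      using ln_ratio[OF q p] \<open>p\<^sup>2 < q\<^sup>2\<close> by (intro mult_right_mono) (auto simp: add_pos_pos p2 q2 less_imp_le)
    also have "\<dots> \<le> 8/p" using final_bd[OF q p pq' qp] .
    also have "\<dots> \<le> 8 * (1/p + 1/q)" using q by simp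
    finally show ?thesis .
  qed
  then show ?thesis by (simp add: Fv_def)
qed

definition Phi :: "real \<Rightarrow> real" where
  "Phi t = (if \<bar>t\<bar> \<le> 1 then 1/sqrt \<bar>t\<bar> else 1/(\<bar>t\<bar> * sqrt \<bar>t\<bar>))"

lemma Phi_nonneg: "0 \<le> Phi t" by (simp add: Phi_def)

lemma Phi_meas[measurable]: "Phi \<in> borel_measurable borel"
  unfolding Phi_def by measurable

definition Phip :: "real \<Rightarrow> ennreal" where
  "Phip t = ennreal (t powr (-1/2)) * indicator {0..1} t + ennreal (t powr (-3/2)) * indicator {1..} t"

lemma Phip_meas[measurable]: "Phip \<in> borel_measurable borel"
  unfolding Phip_def by measurable

lemma Phip_int: "(\<integral>\<^sup>+t. Phip t \<partial>lborel) = 4"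
proof -
  have 1: "(\<integral>\<^sup>+t. ennreal (t powr (-1/2)) * indicator {0..1} t \<partial>lborel) = ennreal 2"
    using nn_integral_has_integral_lebesgue'[OF _ has_integral_powr_from_0[of "-1/2" 1]] by simp
  have 2: "(\<integral>\<^sup>+t. ennreal (t powr (-3/2)) * indicator {1..} t \<partial>lborel) = ennreal 2"
    using nn_integral_has_integral_lebesgue'[OF _ has_integral_powr_to_inf[of "-3/2" 1]] by simp
  have "(\<integral>\<^sup>+t. Phip t \<partial>lborel) = (\<integral>\<^sup>+t. ennreal (t powr (-1/2)) * indicator {0..1} t \<partial>lborel) + (\<integral>\<^sup>+t. ennreal (t powr (-3/2)) * indicator {1..} t \<partial>lborel)"
    unfolding Phip_def by (rule nn_integral_add) auto
  also have "\<dots> = ennreal 2 + ennreal 2" by (simp only: 1 2)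
  also have "\<dots> = 4" by (simp flip: ennreal_plus)
  finally show ?thesis .
qed

lemma Phip_ge: assumes "t > 0" shows "ennreal (Phi t) \<le> Phip t"
proof -
  have k: "1/sqrt t = t powr (-1/2)"
  proof -
    have "t powr (-1/2) = t powr (-(1/2))" by simp
    also have "\<dots> = inverse (t powr (1/2))" by (rule powr_minus)
    also have "\<dots> = inverse (sqrt t)" using assms by (simp only: powr_half_sqrt less_imp_le)
    finally show ?thesis by (simp add: inverse_eq_divide)
  qed
  have k2: "1/(t * sqrt t) = t powr (-3/2)"
  proof -
    have "t powr (-3/2) = t powr (-(1 + 1/2))" by simp
    also have "\<dots> = inverse (t powr (1 + 1/2))" by (rule powr_minus)
    also have "t powr (1 + 1/2) = t powr 1 * t powr (1/2)" by (rule powr_add)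
    also have "\<dots> = t * sqrt t" using assms by (simp add: powr_half_sqrt)
    finally show ?thesis by (simp add: inverse_eq_divide)
  qed
  show ?thesis
  proof (cases "t \<le> 1")
    case True
    then have "Phi t = t powr (-1/2)" using assms k unfolding Phi_def by simp
    moreover have "Phip t = ennreal (t powr (-1/2)) + ennreal (t powr (-3/2)) * indicator {1..} t"
      using True assms unfolding Phip_def by simp
    ultimately show ?thesis by simp
  next
    case False
    then have "Phi t = t powr (-3/2)" using assms k2 unfolding Phi_def by simp
    moreover have "Phip t = ennreal (t powr (-3/2))"
      using False assms unfolding Phip_def by simp
    ultimately show ?thesis by simp
  qed
qed

lemma Phi_even: "Phi (-t) = Phi t" by (simp add: Phi_def)

lemma Phi_le: "ennreal (Phi t) \<le> Phip t + Phip (-t)"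
proof -
  consider "t = 0" | "t > 0" | "t < 0" by linarith
  then show ?thesis
  proof cases
    case 1 then show ?thesis by (simp add: Phi_def)
  next
    case 2 then show ?thesis using Phip_ge[of t] by (meson add_increasing2 order.trans zero_le)
  next
    case 3 then show ?thesis using Phip_ge[of "-t"] Phi_even[of t] by (metis add_increasing neg_0_less_iff_less order.trans zero_le)
  qed
qed

lemma Phi_int: "(\<integral>\<^sup>+t. ennreal (Phi t) \<partial>lborel) \<le> 8"
proof -
  have r: "(\<integral>\<^sup>+t. Phip (-t) \<partial>lborel) = 4"
    using nn_integral_real_affine[OF Phip_meas, of "-1" 0] Phip_int by simp
  have "(\<integral>\<^sup>+t. ennreal (Phi t) \<partial>lborel) \<le> (\<integral>\<^sup>+t. Phip t + Phip (-t) \<partial>lborel)"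
    by (intro nn_integral_mono Phi_le)
  also have "\<dots> = 4 + 4" by (subst nn_integral_add) (auto simp: r Phip_int)
  also have "\<dots> = 8" by simp
  finally show ?thesis .
qed

lemma Y_bd: fixes e y :: real assumes e: "e > 0" and y: "y \<noteq> 0"
  shows "1/(sqrt \<bar>y\<bar> * (1 + e\<^sup>2 * y\<^sup>2)) \<le> sqrt e * Phi (e * y)"
proof -
  have ay: "\<bar>y\<bar> > 0" using y by simp
  have sy: "sqrt \<bar>y\<bar> > 0" using ay by simp
  have ey: "\<bar>e * y\<bar> = e * \<bar>y\<bar>" using e by (simp add: abs_mult)
  have se: "sqrt e > 0" using e by simp
  have d: "1 \<le> 1 + e\<^sup>2 * y\<^sup>2" by simp
  have d': "0 < 1 + e\<^sup>2 * y\<^sup>2" by (simp add: add_pos_nonneg)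
  show ?thesis
  proof (cases "e * \<bar>y\<bar> \<le> 1")
    case True
    have "sqrt e * Phi (e * y) = sqrt e * (1 / (sqrt e * sqrt \<bar>y\<bar>))"
      using True ey by (simp add: Phi_def real_sqrt_mult)
    also have "\<dots> = 1 / sqrt \<bar>y\<bar>" using se by simp
    finally have r: "sqrt e * Phi (e * y) = 1 / sqrt \<bar>y\<bar>" .
    have "1/(sqrt \<bar>y\<bar> * (1 + e\<^sup>2 * y\<^sup>2)) \<le> 1 / sqrt \<bar>y\<bar>"
      using sy d d' by (intro divide_left_mono) (auto simp: mult_pos_pos)
    then show ?thesis using r by simp
  next
    case False
    have "sqrt e * Phi (e * y) = sqrt e * (1 / (e * \<bar>y\<bar> * (sqrt e * sqrt \<bar>y\<bar>)))"
      using False ey by (simp add: Phi_def real_sqrt_mult)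
    also have "\<dots> = 1 / (e * \<bar>y\<bar> * sqrt \<bar>y\<bar>)" using se by (simp add: field_simps)
    finally have r: "sqrt e * Phi (e * y) = 1 / (e * \<bar>y\<bar> * sqrt \<bar>y\<bar>)" .
    have "e * \<bar>y\<bar> * 1 \<le> (e * \<bar>y\<bar>) * (e * \<bar>y\<bar>)" using False e by (intro mult_left_mono) auto
    also have "\<dots> = e\<^sup>2 * y\<^sup>2" by (simp add: power2_eq_square abs_mult_self_eq algebra_simps)
    finally have "e * \<bar>y\<bar> \<le> 1 + e\<^sup>2 * y\<^sup>2" by simp
    then have "e * \<bar>y\<bar> * sqrt \<bar>y\<bar> \<le> sqrt \<bar>y\<bar> * (1 + e\<^sup>2 * y\<^sup>2)"
      using sy by (simp add: mult.commute)
    then have "1/(sqrt \<bar>y\<bar> * (1 + e\<^sup>2 * y\<^sup>2)) \<le> 1 / (e * \<bar>y\<bar> * sqrt \<bar>y\<bar>)"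
      using sy e ay d' by (intro divide_left_mono) (auto simp: mult_pos_pos)
    then show ?thesis using r by simp
  qed
qed

lemma X_bd: fixes e x a :: real assumes e: "e > 0" and x: "x \<noteq> 0" "x \<noteq> a" and a: "\<bar>a\<bar> \<le> 1"
  shows "1/(sqrt \<bar>x - a\<bar> * (1 + e\<^sup>2 * x\<^sup>2)) \<le> 2 * Phi (x - a) + sqrt 2 * (sqrt e * Phi (e * x))"
proof -
  have s: "sqrt \<bar>x - a\<bar> > 0" using x by simp
  have d: "1 \<le> 1 + e\<^sup>2 * x\<^sup>2" by simp
  have d': "0 < 1 + e\<^sup>2 * x\<^sup>2" by (simp add: add_pos_nonneg)
  have P1: "0 \<le> Phi (x - a)" "0 \<le> Phi (e * x)" by (rule Phi_nonneg)+
  show ?thesis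
  proof (cases "\<bar>x - a\<bar> \<le> 2")
    case True
    have "1/(sqrt \<bar>x - a\<bar> * (1 + e\<^sup>2 * x\<^sup>2)) \<le> 1 / sqrt \<bar>x - a\<bar>"
      using s d d' by (intro divide_left_mono) (auto simp: mult_pos_pos)
    also have "\<dots> \<le> 2 * Phi (x - a)"
    proof (cases "\<bar>x - a\<bar> \<le> 1")
      case True then show ?thesis using s by (simp add: Phi_def divide_right_mono)
    next
      case False
      have "1 / sqrt \<bar>x - a\<bar> = \<bar>x - a\<bar> / (\<bar>x - a\<bar> * sqrt \<bar>x - a\<bar>)" using s x by simp
      also have "\<dots> \<le> 2 / (\<bar>x - a\<bar> * sqrt \<bar>x - a\<bar>)" using \<open>\<bar>x - a\<bar> \<le> 2\<close> s False
        by (intro divide_right_mono) auto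
      finally show ?thesis using False by (simp add: Phi_def)
    qed
    finally show ?thesis using P1 e by (smt (verit) mult_nonneg_nonneg real_sqrt_ge_zero)
  next
    case False
    have "\<bar>x\<bar> \<le> 2 * \<bar>x - a\<bar>" using False a abs_triangle_ineq[of "x-a" a] by simp
    then have "sqrt \<bar>x\<bar> \<le> sqrt 2 * sqrt \<bar>x - a\<bar>" by (metis real_sqrt_le_iff real_sqrt_mult)
    have sx: "sqrt \<bar>x\<bar> > 0" using x by simp
    have "1/(sqrt \<bar>x - a\<bar> * (1 + e\<^sup>2 * x\<^sup>2)) = sqrt 2 * (1/(sqrt 2 * sqrt \<bar>x - a\<bar> * (1 + e\<^sup>2 * x\<^sup>2)))"
      by simp
    also have "\<dots> \<le> sqrt 2 * (1/(sqrt \<bar>x\<bar> * (1 + e\<^sup>2 * x\<^sup>2)))"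
      using \<open>sqrt \<bar>x\<bar> \<le> _\<close> sx d d' by (intro mult_left_mono divide_left_mono mult_right_mono mult_pos_pos) auto
    also have "\<dots> \<le> sqrt 2 * (sqrt e * Phi (e * x))"
      using Y_bd[OF e x(1)] by (intro mult_left_mono) auto
    finally show ?thesis using P1 by simp
  qed
qed

definition Xf :: "real \<Rightarrow> real \<Rightarrow> real \<Rightarrow> real" where
  "Xf a e x = 1/(sqrt \<bar>x - a\<bar> * (1 + e\<^sup>2 * x\<^sup>2))"

definition Yf :: "real \<Rightarrow> real \<Rightarrow> real" where
  "Yf e y = 1/(sqrt \<bar>y\<bar> * (1 + e\<^sup>2 * y\<^sup>2))"

lemma Xf_meas[measurable]: "Xf a e \<in> borel_measurable borel" unfolding Xf_def by measurable
lemma Yf_meas[measurable]: "Yf e \<in> borel_measurable borel" unfolding Yf_def by measurable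

lemma Phi_scale: assumes e: "e > 0"
  shows "ennreal e * (\<integral>\<^sup>+y. ennreal (Phi (e * y)) \<partial>lborel) \<le> 8"
proof -
  have "(\<integral>\<^sup>+t. ennreal (Phi t) \<partial>lborel) = ennreal \<bar>e\<bar> * (\<integral>\<^sup>+y. ennreal (Phi (0 + e * y)) \<partial>lborel)"
    using e by (intro nn_integral_real_affine) auto
  then show ?thesis using Phi_int e by simp
qed

lemma Phi_shift: "(\<integral>\<^sup>+x. ennreal (Phi (x - a)) \<partial>lborel) \<le> 8"
proof -
  have "(\<integral>\<^sup>+t. ennreal (Phi t) \<partial>lborel) = ennreal \<bar>1\<bar> * (\<integral>\<^sup>+x. ennreal (Phi (- a + 1 * x)) \<partial>lborel)"
    by (intro nn_integral_real_affine) auto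
  then show ?thesis using Phi_int by simp
qed

lemma Y_int: assumes e: "e > 0"
  shows "(\<integral>\<^sup>+y. ennreal (Yf e y) \<partial>lborel) \<le> ennreal (sqrt e) * (\<integral>\<^sup>+y. ennreal (Phi (e * y)) \<partial>lborel)"
proof -
  have "(\<integral>\<^sup>+y. ennreal (Yf e y) \<partial>lborel) \<le> (\<integral>\<^sup>+y. ennreal (sqrt e) * ennreal (Phi (e * y)) \<partial>lborel)"
  proof (rule nn_integral_mono_AE)
    show "AE y in lborel. ennreal (Yf e y) \<le> ennreal (sqrt e) * ennreal (Phi (e * y))"
      using AE_lborel_singleton[of 0]
    proof eventually_elim
      case (elim y)
      have "ennreal (Yf e y) \<le> ennreal (sqrt e * Phi (e * y))"
        using Y_bd[OF e elim] by (intro ennreal_leI) (simp add: Yf_def)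
      also have "\<dots> = ennreal (sqrt e) * ennreal (Phi (e * y))"
        using Phi_nonneg e by (intro ennreal_mult) auto
      finally show ?case .
    qed
  qed
  also have "\<dots> = ennreal (sqrt e) * (\<integral>\<^sup>+y. ennreal (Phi (e * y)) \<partial>lborel)"
    by (rule nn_integral_cmult) measurable
  finally show ?thesis .
qed

lemma X_int: assumes e: "e > 0" and a: "\<bar>a\<bar> \<le> 1"
  shows "(\<integral>\<^sup>+x. ennreal (Xf a e x) \<partial>lborel) \<le> 16 + ennreal (sqrt 2 * sqrt e) * (\<integral>\<^sup>+y. ennreal (Phi (e * y)) \<partial>lborel)"
proof -
  have "(\<integral>\<^sup>+x. ennreal (Xf a e x) \<partial>lborel) \<le> (\<integral>\<^sup>+x. 2 * ennreal (Phi (x - a)) + ennreal (sqrt 2 * sqrt e) * ennreal (Phi (e * x)) \<partial>lborel)"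
  proof (rule nn_integral_mono_AE)
    show "AE x in lborel. ennreal (Xf a e x) \<le> 2 * ennreal (Phi (x - a)) + ennreal (sqrt 2 * sqrt e) * ennreal (Phi (e * x))"
      using AE_lborel_singleton[of 0] AE_lborel_singleton[of a]
    proof eventually_elim
      case (elim x)
      have "Xf a e x \<le> 2 * Phi (x - a) + (sqrt 2 * sqrt e) * Phi (e * x)"
        using X_bd[OF e elim(1) _ a] elim(2) by (simp add: Xf_def mult.assoc)
      then have "ennreal (Xf a e x) \<le> ennreal (2 * Phi (x - a) + (sqrt 2 * sqrt e) * Phi (e * x))"
        by (rule ennreal_leI)
      also have "\<dots> = 2 * ennreal (Phi (x - a)) + ennreal (sqrt 2 * sqrt e) * ennreal (Phi (e * x))"
      proof -
        have p1: "0 \<le> Phi (x - a)" "0 \<le> Phi (e * x)" "0 \<le> sqrt 2 * sqrt e" using Phi_nonneg e by auto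
        have "ennreal (2 * Phi (x - a) + (sqrt 2 * sqrt e) * Phi (e * x)) = ennreal (2 * Phi (x - a)) + ennreal ((sqrt 2 * sqrt e) * Phi (e * x))"
          using p1 by (intro ennreal_plus) auto
        also have "\<dots> = 2 * ennreal (Phi (x - a)) + ennreal (sqrt 2 * sqrt e) * ennreal (Phi (e * x))"
          using p1 by (simp add: ennreal_mult)
        finally show ?thesis .
      qed
      finally show ?case .
    qed
  qed
  also have "\<dots> = 2 * (\<integral>\<^sup>+x. ennreal (Phi (x - a)) \<partial>lborel) + ennreal (sqrt 2 * sqrt e) * (\<integral>\<^sup>+y. ennreal (Phi (e * y)) \<partial>lborel)"
    by (subst nn_integral_add) (auto simp: nn_integral_cmult)
  also have "\<dots> \<le> 2 * 8 + ennreal (sqrt 2 * sqrt e) * (\<integral>\<^sup>+y. ennreal (Phi (e * y)) \<partial>lborel)"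
    using Phi_shift[of a] by (intro add_mono mult_left_mono) auto
  finally show ?thesis by simp
qed

lemma prod_complex:
  fixes g1 g2 :: "real \<Rightarrow> ennreal"
  assumes [measurable]: "g1 \<in> borel_measurable borel" "g2 \<in> borel_measurable borel"
  shows "(\<integral>\<^sup>+(w::complex). g1 (Re w) * g2 (Im w) \<partial>lborel) = (\<integral>\<^sup>+x. g1 x \<partial>lborel) * (\<integral>\<^sup>+y. g2 y \<partial>lborel)"
proof -
  define f where "f = (\<lambda>b::complex. if b = 1 then g1 else g2)"
  have 1: "(\<Prod>b\<in>Basis. f b (w \<bullet> b)) = g1 (Re w) * g2 (Im w)" for w :: complex
    by (simp add: Basis_complex_def f_def)
  have 2: "(\<Prod>b\<in>(Basis::complex set). (\<integral>\<^sup>+x. f b x \<partial>lborel)) = (\<integral>\<^sup>+x. g1 x \<partial>lborel) * (\<integral>\<^sup>+y. g2 y \<partial>lborel)"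
    by (simp add: Basis_complex_def f_def)
  have "(\<integral>\<^sup>+(w::complex). (\<Prod>b\<in>Basis. f b (w \<bullet> b)) \<partial>lborel) = (\<Prod>b\<in>(Basis::complex set). (\<integral>\<^sup>+x. f b x \<partial>lborel))"
    by (rule nn_integral_lborel_prod) (auto simp: f_def)
  then show ?thesis unfolding 1 2 .
qed

lemma null_Im: "emeasure lborel {w::complex. Im w = c} = 0"
proof -
  have s: "{w::complex. Im w = c} \<in> sets lborel" by measurable
  have "emeasure lborel {w::complex. Im w = c} = (\<integral>\<^sup>+w. indicator {w::complex. Im w = c} w \<partial>lborel)"
    using s by simp
  also have "\<dots> = (\<integral>\<^sup>+(w::complex). (\<lambda>_. 1::ennreal) (Re w) * indicator {c} (Im w) \<partial>lborel)"
    by (intro nn_integral_cong) (auto simp: indicator_def)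
  also have "\<dots> = (\<integral>\<^sup>+(x::real). (1::ennreal) \<partial>lborel) * (\<integral>\<^sup>+(y::real). (indicator {c} y :: ennreal) \<partial>lborel)"
    using prod_complex[of "\<lambda>_::real. 1::ennreal" "indicator {c::real}"] by simp
  also have "\<dots> = 0" by simp
  finally show ?thesis .
qed

lemma null_Re: "emeasure lborel {w::complex. Re w = c} = 0"
proof -
  have s: "{w::complex. Re w = c} \<in> sets lborel" by measurable
  have "emeasure lborel {w::complex. Re w = c} = (\<integral>\<^sup>+w. indicator {w::complex. Re w = c} w \<partial>lborel)"
    using s by simp
  also have "\<dots> = (\<integral>\<^sup>+(w::complex). indicator {c} (Re w) * (\<lambda>_. 1::ennreal) (Im w) \<partial>lborel)"
    by (intro nn_integral_cong) (auto simp: indicator_def)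
  also have "\<dots> = (\<integral>\<^sup>+(y::real). (indicator {c} y :: ennreal) \<partial>lborel) * (\<integral>\<^sup>+(x::real). (1::ennreal) \<partial>lborel)"
    using prod_complex[of "indicator {c::real}" "\<lambda>_::real. 1::ennreal"] by simp
  also have "\<dots> = 0" by simp
  finally show ?thesis .
qed

lemma AE_Im: "AE w in (lborel::complex measure). Im w \<noteq> c"
  by (rule AE_I'[of "{w::complex. Im w = c}"]) (auto intro!: null_setsI null_Im)

lemma AE_Re: "AE w in (lborel::complex measure). Re w \<noteq> c"
  by (rule AE_I'[of "{w::complex. Re w = c}"]) (auto intro!: null_setsI null_Re)

definition Wt :: "real \<Rightarrow> complex \<Rightarrow> real" where
  "Wt e w = 4 / (1 + e\<^sup>2 * (cmod w)\<^sup>2)\<^sup>2"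

lemma pt2D: fixes e a :: real assumes e: "e > 0" and y: "Im w \<noteq> 0" and x: "Re w \<noteq> a"
  shows "Wt e w / cmod (w - of_real a) \<le> 4 * (Xf a e (Re w) * Yf e (Im w))"
proof -
  define x where "x = Re w"
  define y where "y = Im w"
  have y0: "y \<noteq> 0" and x0: "x - a \<noteq> 0" using x y by (auto simp: x_def y_def)
  have n: "cmod (w - of_real a) = sqrt ((x-a)\<^sup>2 + y\<^sup>2)" by (simp add: cmod_def x_def y_def)
  have n2: "(cmod w)\<^sup>2 = x\<^sup>2 + y\<^sup>2" by (simp add: cmod_power2 x_def y_def)
  define A where "A = (1 + e\<^sup>2 * x\<^sup>2) * (1 + e\<^sup>2 * y\<^sup>2)"
  define B where "B = (1 + e\<^sup>2 * (x\<^sup>2 + y\<^sup>2))\<^sup>2"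
  have A0: "A > 0" unfolding A_def by (intro mult_pos_pos add_pos_nonneg) auto
  have AB: "A \<le> B"
  proof -
    define u where "u = e\<^sup>2 * x\<^sup>2"
    define v where "v = e\<^sup>2 * y\<^sup>2"
    have u: "u \<ge> 0" and v: "v \<ge> 0" by (auto simp: u_def v_def)
    have "A = 1 + u + v + u * v" unfolding A_def u_def v_def by (simp add: algebra_simps)
    moreover have "B = 1 + 2 * u + 2 * v + u * u + 2 * (u * v) + v * v" unfolding B_def u_def v_def
      by (simp add: power2_eq_square algebra_simps)
    moreover have "u * v \<ge> 0" "u * u \<ge> 0" "v * v \<ge> 0" using u v by auto
    ultimately show ?thesis using u v by linarith
  qed
  have s1: "sqrt \<bar>x - a\<bar> * sqrt \<bar>y\<bar> \<le> sqrt ((x-a)\<^sup>2 + y\<^sup>2)"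
  proof -
    have "\<bar>x - a\<bar> * \<bar>y\<bar> \<le> (x-a)\<^sup>2 + y\<^sup>2"
    proof -
      have "0 \<le> (\<bar>x-a\<bar> - \<bar>y\<bar>)\<^sup>2" by simp
      moreover have "(\<bar>x-a\<bar> - \<bar>y\<bar>)\<^sup>2 = (x-a)\<^sup>2 + y\<^sup>2 - 2 * (\<bar>x-a\<bar> * \<bar>y\<bar>)"
        by (simp add: power2_diff)
      moreover have "0 \<le> \<bar>x-a\<bar> * \<bar>y\<bar>" by simp
      ultimately show ?thesis by linarith
    qed
    then show ?thesis by (simp add: real_sqrt_mult[symmetric])
  qed
  have sp: "sqrt \<bar>x - a\<bar> * sqrt \<bar>y\<bar> > 0" using x0 y0 by simp
  have "Wt e w / cmod (w - of_real a) = 4 / (B * sqrt ((x-a)\<^sup>2 + y\<^sup>2))"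
    unfolding Wt_def n n2 B_def by simp
  also have "\<dots> \<le> 4 / (A * (sqrt \<bar>x - a\<bar> * sqrt \<bar>y\<bar>))"
    using AB s1 A0 sp y0 by (intro divide_left_mono mult_mono mult_pos_pos) (auto simp: add_nonneg_pos)
  also have "\<dots> = 4 * (Xf a e x * Yf e y)" unfolding A_def Xf_def Yf_def by simp
  finally show ?thesis by (simp add: x_def y_def)
qed

lemma real_final: fixes s i :: real assumes s: "0 < s" "s \<le> 1" and i: "0 \<le> i" and si: "s * s * i \<le> 8"
  shows "4 * ((16 + sqrt 2 * s * i) * (s * i)) \<le> 896 / (s * s)"
proof -
  define t where "t = s * i"
  have t0: "0 \<le> t" using s i by (simp add: t_def)
  have st: "s * t \<le> 8" using si by (simp add: t_def mult.assoc)
  have st0: "0 \<le> s * t" using s t0 by simp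
  have a1: "16 * t * (s * s) \<le> 128"
  proof -
    have "16 * t * (s * s) = 16 * s * (s * t)" by (simp add: algebra_simps)
    also have "\<dots> \<le> 16 * 1 * 8" using s st st0 by (intro mult_mono) auto
    finally show ?thesis by simp
  qed
  have a2: "sqrt 2 * (s * t) * (s * t) \<le> 96"
  proof -
    have "sqrt 2 \<le> 3/2" by (rule real_le_lsqrt) (auto simp: power2_eq_square)
    have "(s * t) * (s * t) \<le> 8 * 8" using st st0 by (intro mult_mono) auto
    then have "sqrt 2 * ((s * t) * (s * t)) \<le> 3/2 * (8 * 8)"
      using \<open>sqrt 2 \<le> 3/2\<close> st0 st by (intro mult_mono) auto
    then show ?thesis by (simp add: mult.assoc)
  qed
  have "4 * ((16 + sqrt 2 * s * i) * (s * i)) * (s * s) = 4 * (16 * t * (s * s) + sqrt 2 * (s * t) * (s * t))"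
    by (simp add: t_def algebra_simps)
  also have "\<dots> \<le> 896"
  proof -
    have "16 * t * (s * s) + sqrt 2 * (s * t) * (s * t) \<le> 128 + 96" using add_mono[OF a1 a2] .
    from mult_left_mono[OF this, of 4] show ?thesis by simp
  qed
  finally show ?thesis using s by (simp add: pos_le_divide_eq)
qed

lemma int2D: fixes e a :: real assumes e: "0 < e" "e \<le> 1" and a: "\<bar>a\<bar> \<le> 1"
  shows "(\<integral>\<^sup>+w. ennreal (Wt e w / cmod (w - of_real a)) \<partial>lborel) \<le> ennreal (896 / e)"
proof -
  have Xn: "0 \<le> Xf a e x" for x by (simp add: Xf_def)
  have Yn: "0 \<le> Yf e y" for y by (simp add: Yf_def)
  have "(\<integral>\<^sup>+w. ennreal (Wt e w / cmod (w - of_real a)) \<partial>lborel)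
      \<le> (\<integral>\<^sup>+(w::complex). 4 * (ennreal (Xf a e (Re w)) * ennreal (Yf e (Im w))) \<partial>lborel)"
  proof (rule nn_integral_mono_AE)
    show "AE w in lborel. ennreal (Wt e w / cmod (w - of_real a)) \<le> 4 * (ennreal (Xf a e (Re w)) * ennreal (Yf e (Im w)))"
      using AE_Im[of 0] AE_Re[of a]
    proof eventually_elim
      case (elim w)
      have "ennreal (Wt e w / cmod (w - of_real a)) \<le> ennreal (4 * (Xf a e (Re w) * Yf e (Im w)))"
        using pt2D[OF e(1) elim] by (rule ennreal_leI)
      also have "\<dots> = 4 * (ennreal (Xf a e (Re w)) * ennreal (Yf e (Im w)))"
        using Xn Yn by (simp add: ennreal_mult)
      finally show ?case .
    qed
  qed
  also have "\<dots> = 4 * (\<integral>\<^sup>+(w::complex). ennreal (Xf a e (Re w)) * ennreal (Yf e (Im w)) \<partial>lborel)"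
    by (rule nn_integral_cmult) measurable
  also have "\<dots> = 4 * ((\<integral>\<^sup>+x. ennreal (Xf a e x) \<partial>lborel) * (\<integral>\<^sup>+y. ennreal (Yf e y) \<partial>lborel))"
    using prod_complex[of "\<lambda>x. ennreal (Xf a e x)" "\<lambda>y. ennreal (Yf e y)"] by simp
  also have "\<dots> \<le> ennreal (896 / e)"
  proof -
    define I where "I = (\<integral>\<^sup>+y. ennreal (Phi (e * y)) \<partial>lborel)"
    have eI: "ennreal e * I \<le> 8" using Phi_scale[OF e(1)] by (simp add: I_def)
    have "I \<noteq> \<infinity>" using eI e(1) by (auto simp: ennreal_mult_top top_unique)
    then obtain i where i: "I = ennreal i" "0 \<le> i" by (cases I) auto
    have ei0: "ennreal (e * i) \<le> ennreal 8" using eI i e(1) by (simp add: ennreal_mult[symmetric])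
    have ei: "e * i \<le> 8" using ei0 by (subst (asm) ennreal_le_iff) auto
    have X: "(\<integral>\<^sup>+x. ennreal (Xf a e x) \<partial>lborel) \<le> ennreal (16 + sqrt 2 * sqrt e * i)"
      using X_int[OF e(1) a] i e(1) by (simp add: I_def[symmetric] ennreal_mult[symmetric] ennreal_plus[symmetric] mult.assoc)
    have Y: "(\<integral>\<^sup>+y. ennreal (Yf e y) \<partial>lborel) \<le> ennreal (sqrt e * i)"
      using Y_int[OF e(1)] i e(1) by (simp add: I_def[symmetric] ennreal_mult[symmetric])
    have "4 * ((\<integral>\<^sup>+x. ennreal (Xf a e x) \<partial>lborel) * (\<integral>\<^sup>+y. ennreal (Yf e y) \<partial>lborel))
        \<le> 4 * (ennreal (16 + sqrt 2 * sqrt e * i) * ennreal (sqrt e * i))"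
      using X Y by (intro mult_left_mono mult_mono) auto
    also have "\<dots> = ennreal (4 * ((16 + sqrt 2 * sqrt e * i) * (sqrt e * i)))"
      using i e(1) by (simp add: ennreal_mult)
    also have "\<dots> \<le> ennreal (896 / e)"
    proof (rule ennreal_leI)
      have "sqrt e * sqrt e = e" using e(1) by simp
      then show "4 * ((16 + sqrt 2 * sqrt e * i) * (sqrt e * i)) \<le> 896 / e"
        using real_final[of "sqrt e" i] e i ei by (simp add: real_sqrt_le_1_iff)
    qed
    finally show ?thesis .
  qed
  finally show ?thesis .
qed

lemma alg1: fixes a b :: real assumes "a \<noteq> 0" "b \<noteq> 0" shows "(a/b)\<^sup>2 * (4/a\<^sup>2) = 4/b\<^sup>2"
  using assms by (simp add: power_divide)

lemma alg2: fixes e r :: real assumes "e \<noteq> 0" shows "16 * r * (e * e) * (896/e + 896/e) = 28672 * r * e"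
  using assms by (simp add: field_simps)

lemma LINT_le: fixes f :: "'a \<Rightarrow> real"
  assumes "(\<integral>\<^sup>+x. ennreal (f x) \<partial>M) \<le> ennreal K" "0 \<le> K"
  shows "integral\<^sup>L M f \<le> K"
proof (cases "integrable M f")
  case True
  have "integral\<^sup>L M f = enn2real (\<integral>\<^sup>+x. f x \<partial>M) - enn2real (\<integral>\<^sup>+x. ennreal (- f x) \<partial>M)"
    using True by (rule real_lebesgue_integral_def)
  also have "\<dots> \<le> enn2real (\<integral>\<^sup>+x. f x \<partial>M)" by simp
  also have "\<dots> \<le> enn2real (ennreal K)" using assms by (intro enn2real_mono) auto
  also have "\<dots> = K" using assms by simp
  finally show ?thesis .
next
  case False then show ?thesis using assms by (simp add: not_integrable_integral_eq)
qed

lemma pt_F: fixes w :: complex assumes "w \<noteq> 1" "w \<noteq> -1"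
  shows "- v * F_nl w v \<le> 8 * (1 / cmod (w - 1) + 1 / cmod (w + 1))"
proof -
  have "w + 1 \<noteq> 0"
  proof
    assume "w + 1 = 0" then have "w = -1" by (simp add: eq_neg_iff_add_eq_0)
    then show False using assms by simp
  qed
  then have p: "cmod (w + 1) > 0" by simp
  have q: "cmod (w - 1) > 0" using assms by simp
  have "\<bar>cmod (w + 1) - cmod (w - 1)\<bar> \<le> cmod ((w + 1) - (w - 1))" by (rule norm_triangle_ineq3)
  then have pq1: "\<bar>cmod (w + 1) - cmod (w - 1)\<bar> \<le> 2" by simp
  have "cmod ((w + 1) - (w - 1)) \<le> cmod (w + 1) + cmod (w - 1)" by (rule norm_triangle_ineq4)
  then have pq2: "cmod (w + 1) + cmod (w - 1) \<ge> 2" by simp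
  have X: "-v * (((cmod (w - 1))\<^sup>2 * exp v - (cmod (w + 1))\<^sup>2) / ((cmod (w - 1))\<^sup>2 * exp v + (cmod (w + 1))\<^sup>2))
     \<le> 8 * (1 / cmod (w + 1) + 1 / cmod (w - 1))" by (rule phi_bound[OF p q pq1 pq2])
  have "8 * (1 / cmod (w + 1) + 1 / cmod (w - 1)) = 8 * (1 / cmod (w - 1) + 1 / cmod (w + 1))" by simp
  then show ?thesis using X unfolding F_nl_def by linarith
qed

theorem mainTheorem10:
  fixes R :: real
  assumes "R > 0"
  shows "\<exists>C>0. \<forall>\<epsilon> h. 0 < \<epsilon> \<and> \<epsilon> \<le> 1 \<and> smooth_S2 h \<and> hat_h_eq R \<epsilon> h
            \<longrightarrow> dirichlet_S2 h \<le> C * \<epsilon>"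
proof (intro exI[of _ "28672 * R\<^sup>2 + 1"] conjI allI impI)
  show "0 < 28672 * R\<^sup>2 + 1" by (simp add: add_nonneg_pos)
  fix e :: real and h :: "complex \<Rightarrow> real"
  assume H: "0 < e \<and> e \<le> 1 \<and> smooth_S2 h \<and> hat_h_eq R e h"
  then have e: "0 < e" "e \<le> 1" and eq: "hat_h_eq R e h" by auto
  define K where "K = 16 * R\<^sup>2 * e\<^sup>2"
  have K0: "0 \<le> K" by (simp add: K_def)
  have Wn: "0 \<le> Wt e w" for w by (simp add: Wt_def)
  have g: "h w * (- lap_S2 h w) * (4 / (1 + (cmod w)\<^sup>2)\<^sup>2) = 2 * R\<^sup>2 * e\<^sup>2 * Wt e w * (- h w * F_nl w (h w))" for w
  proof -
    have l: "- lap_S2 h w = - (2 * R\<^sup>2 * e\<^sup>2 * (f_eps e w)\<^sup>2 * F_nl w (h w))"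
      proof -
      have "- lap_S2 h w + 2 * R\<^sup>2 * e\<^sup>2 * (f_eps e w)\<^sup>2 * F_nl w (h w) = 0" using eq unfolding hat_h_eq_def by blast
      then show ?thesis by linarith
    qed
    have a: "1 + (cmod w)\<^sup>2 > 0" by (simp add: add_pos_nonneg)
    have b: "1 + e\<^sup>2 * (cmod w)\<^sup>2 > 0" by (simp add: add_pos_nonneg)
    have fw: "(f_eps e w)\<^sup>2 * (4 / (1 + (cmod w)\<^sup>2)\<^sup>2) = Wt e w"
      unfolding f_eps_def Wt_def using a b by (intro alg1) auto
    define W0 where "W0 = 4 / (1 + (cmod w)\<^sup>2)\<^sup>2"
    define Fw where "Fw = F_nl w (h w)"
    define fe where "fe = (f_eps e w)\<^sup>2"
    have "h w * (- (2 * R\<^sup>2 * e\<^sup>2 * fe * Fw)) * W0 = 2 * R\<^sup>2 * e\<^sup>2 * (fe * W0) * (- h w * Fw)"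
      by (simp add: algebra_simps)
    then show ?thesis unfolding l fw[folded W0_def fe_def] W0_def[symmetric] Fw_def[symmetric] fe_def[symmetric] by simp
  qed
  have "(\<integral>\<^sup>+w. ennreal (h w * (- lap_S2 h w) * (4 / (1 + (cmod w)\<^sup>2)\<^sup>2)) \<partial>lborel)
      \<le> (\<integral>\<^sup>+w. ennreal K * (ennreal (Wt e w / cmod (w - of_real 1)) + ennreal (Wt e w / cmod (w - of_real (-1)))) \<partial>lborel)"
  proof (rule nn_integral_mono_AE)
    show "AE w in lborel. ennreal (h w * (- lap_S2 h w) * (4 / (1 + (cmod w)\<^sup>2)\<^sup>2))
       \<le> ennreal K * (ennreal (Wt e w / cmod (w - of_real 1)) + ennreal (Wt e w / cmod (w - of_real (-1))))"
      using AE_Im[of 0]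
    proof eventually_elim
      case (elim w)
      then have w: "w \<noteq> 1" "w \<noteq> -1" by auto
      have "2 * R\<^sup>2 * e\<^sup>2 * Wt e w * (- h w * F_nl w (h w)) \<le> 2 * R\<^sup>2 * e\<^sup>2 * Wt e w * (8 * (1 / cmod (w - 1) + 1 / cmod (w + 1)))"
        using pt_F[OF w, of "h w"] Wn[of w] by (intro mult_left_mono) auto
      also have "\<dots> = K * (Wt e w / cmod (w - of_real 1) + Wt e w / cmod (w - of_real (-1)))"
        unfolding K_def by (simp add: algebra_simps)
      finally have "ennreal (h w * (- lap_S2 h w) * (4 / (1 + (cmod w)\<^sup>2)\<^sup>2)) \<le> ennreal (K * (Wt e w / cmod (w - of_real 1) + Wt e w / cmod (w - of_real (-1))))"
        unfolding g by (rule ennreal_leI)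
      also have "\<dots> = ennreal K * (ennreal (Wt e w / cmod (w - of_real 1)) + ennreal (Wt e w / cmod (w - of_real (-1))))"
        using K0 Wn[of w] by (simp add: ennreal_mult ennreal_plus)
      finally show ?case .
    qed
  qed
  also have "\<dots> = ennreal K * ((\<integral>\<^sup>+w. ennreal (Wt e w / cmod (w - of_real 1)) \<partial>lborel) + (\<integral>\<^sup>+w. ennreal (Wt e w / cmod (w - of_real (-1))) \<partial>lborel))"
  proof -
    have m1: "(\<lambda>w. ennreal (Wt e w / cmod (w - of_real 1))) \<in> borel_measurable lborel" unfolding Wt_def by measurable
    have m2: "(\<lambda>w. ennreal (Wt e w / cmod (w - of_real (-1)))) \<in> borel_measurable lborel" unfolding Wt_def by measurable
    have "(\<integral>\<^sup>+w. ennreal (Wt e w / cmod (w - of_real 1)) + ennreal (Wt e w / cmod (w - of_real (-1))) \<partial>lborel)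
       = (\<integral>\<^sup>+w. ennreal (Wt e w / cmod (w - of_real 1)) \<partial>lborel) + (\<integral>\<^sup>+w. ennreal (Wt e w / cmod (w - of_real (-1))) \<partial>lborel)"
      using m1 m2 by (rule nn_integral_add)
    moreover have "(\<integral>\<^sup>+w. ennreal K * (ennreal (Wt e w / cmod (w - of_real 1)) + ennreal (Wt e w / cmod (w - of_real (-1)))) \<partial>lborel)
       = ennreal K * (\<integral>\<^sup>+w. ennreal (Wt e w / cmod (w - of_real 1)) + ennreal (Wt e w / cmod (w - of_real (-1))) \<partial>lborel)"
      using m1 m2 by (intro nn_integral_cmult) auto
    ultimately show ?thesis by simp
  qed
  also have "\<dots> \<le> ennreal K * (ennreal (896 / e) + ennreal (896 / e))"
    using int2D[OF e, of 1] int2D[OF e, of "-1"] by (intro mult_left_mono add_mono) auto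
  also have "\<dots> = ennreal (28672 * R\<^sup>2 * e)"
  proof -
    have "ennreal K * (ennreal (896 / e) + ennreal (896 / e)) = ennreal (K * (896 / e + 896 / e))"
    proof -
      have "ennreal (896 / e) + ennreal (896 / e) = ennreal (896 / e + 896 / e)" using e by (intro ennreal_plus[symmetric]) auto
      moreover have "ennreal (K * (896 / e + 896 / e)) = ennreal K * ennreal (896 / e + 896 / e)" using K0 e by (intro ennreal_mult) auto
      ultimately show ?thesis by simp
    qed
    moreover have "K * (896 / e + 896 / e) = 28672 * R\<^sup>2 * e"
      using e alg2[of e "R\<^sup>2"] unfolding K_def by (simp add: power2_eq_square)
    ultimately show ?thesis by simp
  qed
  finally have "dirichlet_S2 h \<le> 28672 * R\<^sup>2 * e"
    unfolding dirichlet_S2_def by (rule LINT_le) (use e in simp)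
  also have "\<dots> \<le> (28672 * R\<^sup>2 + 1) * e" using e by (simp add: algebra_simps)
  finally show "dirichlet_S2 h \<le> (28672 * R\<^sup>2 + 1) * e" .
qed

end
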